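(* Let $t \ge 3$ be an integer and let $G$ be a block graph. Then $\mathrm{CF}_t(G)$ is $(t-2)$-decomposable and hence shellable.
   Context: All graphs are finite and simple. A block of a graph is a maximal connected subgraph that remains connected after removal of any single vertex; $G$ is a block graph if every block is a complete graph. $\mathrm{CF}_t(G)$ is the simplicial complex on $V(G)$ whose faces are the subsets $A\subseteq V(G)$ such that $G[A]$ contains no clique on $t$ vertices. For a simplicial complex $\Delta$ on $V$ and a face $F$: $\operatorname{link}_\Delta(F) = \{F' : F'\cap F=\emptyset, F'\cup F\in\Delta\}$, $\Delta\setminus F = \{H\in\Delta : H\cap F=\emptyset\}$, $\dim F=|F|-1$. A face $\sigma$ is a shedding face if for every $\tau\in\Delta$ with $\sigma\subseteq\tau$ and every $v\in\sigma$ there is $w\in V\setminus\tau$ with $(\tau\cup\{w\})\setminus\{v\}\in\Delta$. $\Delta$ is $k$-decomposable if it is a simplex (including $\emptyset$, $\{\emptyset\}$) or has a shedding face $\sigma$ with $\dim\sigma\le k$ such that $\Delta\setminus\sigma$ and $\operatorname{link}_\Delta(\sigma)$ are $k$-decomposable. $\Delta$ is shellable if its facets admit an order $F_1,\dots,F_s$ such that for all $i<j$ there exist $v\in F_j\setminus F_i$ and $\ell<j$ with $F_j\setminus F_\ell=\{v\}$. *)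

theory Defs
  imports Main
begin

definition simple_graph :: "'a set \<Rightarrow> 'a set set \<Rightarrow> bool" where
  "simple_graph V E \<longleftrightarrow> finite V \<and> (\<forall>e\<in>E. e \<subseteq> V \<and> card e = 2)"

definition is_subgraph :: "'a set \<Rightarrow> 'a set set \<Rightarrow> 'a set \<Rightarrow> 'a set set \<Rightarrow> bool" where
  "is_subgraph W F V E \<longleftrightarrow> W \<subseteq> V \<and> F \<subseteq> E \<and> (\<forall>e\<in>F. e \<subseteq> W)"

definition adj_rel :: "'a set set \<Rightarrow> ('a \<times> 'a) set" where
  "adj_rel F = {(x, y). {x, y} \<in> F}"

definition connected_graph :: "'a set \<Rightarrow> 'a set set \<Rightarrow> bool" where
  "connected_graph W F \<longleftrightarrow> W \<noteq> {} \<and> (\<forall>x\<in>W. \<forall>y\<in>W. (x, y) \<in> (adj_rel F)\<^sup>*)"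

text \<open>Connected, and remains connected after deleting any single vertex
  (deleting the only vertex of a one-vertex graph is not counted as disconnecting).\<close>
definition biconn :: "'a set \<Rightarrow> 'a set set \<Rightarrow> bool" where
  "biconn W F \<longleftrightarrow> connected_graph W F \<and>
     (\<forall>v\<in>W. W - {v} \<noteq> {} \<longrightarrow> connected_graph (W - {v}) {e\<in>F. v \<notin> e})"

definition is_block :: "'a set \<Rightarrow> 'a set set \<Rightarrow> 'a set \<Rightarrow> 'a set set \<Rightarrow> bool" where
  "is_block V E W F \<longleftrightarrow> is_subgraph W F V E \<and> biconn W F \<and>
     (\<forall>W' F'. is_subgraph W' F' V E \<and> biconn W' F' \<and> W \<subseteq> W' \<and> F \<subseteq> F'
        \<longrightarrow> W' = W \<and> F' = F)"

definition complete_graph :: "'a set \<Rightarrow> 'a set set \<Rightarrow> bool" where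
  "complete_graph W F \<longleftrightarrow> (\<forall>x\<in>W. \<forall>y\<in>W. x \<noteq> y \<longrightarrow> {x, y} \<in> F)"

definition block_graph :: "'a set \<Rightarrow> 'a set set \<Rightarrow> bool" where
  "block_graph V E \<longleftrightarrow> simple_graph V E \<and>
     (\<forall>W F. is_block V E W F \<longrightarrow> complete_graph W F)"

definition is_clique :: "'a set set \<Rightarrow> 'a set \<Rightarrow> bool" where
  "is_clique E K \<longleftrightarrow> (\<forall>x\<in>K. \<forall>y\<in>K. x \<noteq> y \<longrightarrow> {x, y} \<in> E)"

definition CF :: "nat \<Rightarrow> 'a set \<Rightarrow> 'a set set \<Rightarrow> 'a set set" where
  "CF t V E = {A. A \<subseteq> V \<and> \<not> (\<exists>K\<subseteq>A. card K = t \<and> is_clique E K)}"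

definition link :: "'a set set \<Rightarrow> 'a set \<Rightarrow> 'a set set" where
  "link \<Delta> F = {F'. F' \<inter> F = {} \<and> F' \<union> F \<in> \<Delta>}"

definition del :: "'a set set \<Rightarrow> 'a set \<Rightarrow> 'a set set" where
  "del \<Delta> F = {H\<in>\<Delta>. H \<inter> F = {}}"

text \<open>Shedding face. The requirement w \<in> V is automatic since
  (\<tau> \<union> {w}) - {v} is then a face containing w (as w \<notin> \<tau>, v \<in> \<tau>).\<close>
definition shedding_face :: "'a set set \<Rightarrow> 'a set \<Rightarrow> bool" where
  "shedding_face \<Delta> \<sigma> \<longleftrightarrow> \<sigma> \<in> \<Delta> \<and>
     (\<forall>\<tau>\<in>\<Delta>. \<sigma> \<subseteq> \<tau> \<longrightarrow> (\<forall>v\<in>\<sigma>. \<exists>w. w \<notin> \<tau> \<and> (insert w \<tau>) - {v} \<in> \<Delta>))"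

text \<open>A simplex: the void complex or the power set of a finite set (Pow {} = {{}}).\<close>
definition is_simplex :: "'a set set \<Rightarrow> bool" where
  "is_simplex \<Delta> \<longleftrightarrow> \<Delta> = {} \<or> (\<exists>F. finite F \<and> \<Delta> = Pow F)"

text \<open>k-decomposability; dim \<sigma> = card \<sigma> - 1 \<le> k is written card \<sigma> \<le> k + 1.\<close>
inductive k_decomposable :: "nat \<Rightarrow> 'a set set \<Rightarrow> bool" for k :: nat where
  simplex: "is_simplex \<Delta> \<Longrightarrow> k_decomposable k \<Delta>"
| shed: "\<lbrakk> shedding_face \<Delta> \<sigma>; card \<sigma> \<le> k + 1;
          k_decomposable k (del \<Delta> \<sigma>); k_decomposable k (link \<Delta> \<sigma>) \<rbrakk>
         \<Longrightarrow> k_decomposable k \<Delta>"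

definition facets :: "'a set set \<Rightarrow> 'a set set" where
  "facets \<Delta> = {F\<in>\<Delta>. \<forall>G\<in>\<Delta>. F \<subseteq> G \<longrightarrow> G = F}"

definition shellable :: "'a set set \<Rightarrow> bool" where
  "shellable \<Delta> \<longleftrightarrow> (\<exists>Fs. distinct Fs \<and> set Fs = facets \<Delta> \<and>
     (\<forall>i j. i < j \<and> j < length Fs \<longrightarrow>
        (\<exists>v \<in> Fs ! j - Fs ! i. \<exists>l < j. Fs ! j - Fs ! l = {v})))"

end

theory Submission
  imports Defs
begin


lemma facets_shed:
  assumes fin: "finite \<Delta>"
    and shed: "\<forall>\<tau>\<in>\<Delta>. y \<in> \<tau> \<longrightarrow> (\<exists>w. w \<notin> \<tau> \<and> insert w \<tau> - {y} \<in> \<Delta>)"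
  shows "facets \<Delta> = facets (del \<Delta> {y}) \<union> insert y ` facets (link \<Delta> {y})"
proof (rule set_eqI, rule iffI)
  fix F assume F: "F \<in> facets \<Delta>"
  show "F \<in> facets (del \<Delta> {y}) \<union> insert y ` facets (link \<Delta> {y})"
  proof (cases "y \<in> F")
    case False
    then have "F \<in> facets (del \<Delta> {y})" using F unfolding facets_def del_def by auto
    then show ?thesis by auto
  next
    case True
    have "F - {y} \<in> facets (link \<Delta> {y})"
    proof -
      have "F - {y} \<in> link \<Delta> {y}" using F True unfolding facets_def link_def
        by (auto simp: insert_absorb)
      moreover have "\<forall>G\<in>link \<Delta> {y}. F - {y} \<subseteq> G \<longrightarrow> G = F - {y}"
      proof (intro ballI impI)
        fix G assume G: "G \<in> link \<Delta> {y}" "F - {y} \<subseteq> G"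
        then have "G \<union> {y} \<in> \<Delta>" "y \<notin> G" unfolding link_def by auto
        moreover have "F \<subseteq> G \<union> {y}" using G by auto
        ultimately have "G \<union> {y} = F" using F unfolding facets_def by auto
        then show "G = F - {y}" using \<open>y \<notin> G\<close> by auto
      qed
      ultimately show ?thesis unfolding facets_def by auto
    qed
    moreover have "F = insert y (F - {y})" using True by auto
    ultimately show ?thesis by blast
  qed
next
  fix F assume "F \<in> facets (del \<Delta> {y}) \<union> insert y ` facets (link \<Delta> {y})"
  then show "F \<in> facets \<Delta>"
  proof
    assume F: "F \<in> facets (del \<Delta> {y})"
    then have FD: "F \<in> \<Delta>" "y \<notin> F" unfolding facets_def del_def by auto
    have "\<forall>G\<in>\<Delta>. F \<subseteq> G \<longrightarrow> G = F"
    proof (intro ballI impI)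
      fix G assume G: "G \<in> \<Delta>" "F \<subseteq> G"
      show "G = F"
      proof (cases "y \<in> G")
        case False
        then show ?thesis using F G unfolding facets_def del_def by auto
      next
        case True
        then obtain w where w: "w \<notin> G" "insert w G - {y} \<in> \<Delta>" using shed G by blast
        then have "insert w G - {y} \<in> del \<Delta> {y}" unfolding del_def by auto
        moreover have "F \<subseteq> insert w G - {y}" using G FD by auto
        ultimately have "insert w G - {y} = F" using F unfolding facets_def by blast
        then have False using w G True by auto
        then show ?thesis ..
      qed
    qed
    then show ?thesis using FD unfolding facets_def by auto
  next
    assume "F \<in> insert y ` facets (link \<Delta> {y})"
    then obtain G where G: "G \<in> facets (link \<Delta> {y})" "F = insert y G" by auto
    then have GL: "insert y G \<in> \<Delta>" "y \<notin> G" unfolding facets_def link_def by auto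
    have "\<forall>H\<in>\<Delta>. F \<subseteq> H \<longrightarrow> H = F"
    proof (intro ballI impI)
      fix H assume H: "H \<in> \<Delta>" "F \<subseteq> H"
      then have "H - {y} \<in> link \<Delta> {y}" using G unfolding link_def by (auto simp: insert_absorb)
      moreover have "G \<subseteq> H - {y}" using H G GL by auto
      ultimately have "H - {y} = G" using G unfolding facets_def by blast
      then show "H = F" using H G by auto
    qed
    then show ?thesis using G(2) GL(1) unfolding facets_def by (simp only: mem_Collect_eq simp_thms)
  qed
qed

lemma facet_above:
  assumes "finite \<Delta>" "T \<in> \<Delta>"
  shows "\<exists>H\<in>facets \<Delta>. T \<subseteq> H"
proof -
  obtain H where "H \<in> \<Delta>" "T \<subseteq> H" "\<forall>b\<in>\<Delta>. H \<subseteq> b \<longrightarrow> H = b"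
    using finite_has_maximal2[OF assms] by blast
  then show ?thesis unfolding facets_def by auto
qed

lemma shellable_shed:
  assumes fin: "finite \<Delta>"
    and shed: "\<forall>\<tau>\<in>\<Delta>. y \<in> \<tau> \<longrightarrow> (\<exists>w. w \<notin> \<tau> \<and> insert w \<tau> - {y} \<in> \<Delta>)"
    and sd: "shellable (del \<Delta> {y})" and sl: "shellable (link \<Delta> {y})"
  shows "shellable \<Delta>"
proof -
  obtain Ds where Ds: "distinct Ds" "set Ds = facets (del \<Delta> {y})"
    "\<forall>i j. i < j \<and> j < length Ds \<longrightarrow> (\<exists>v \<in> Ds ! j - Ds ! i. \<exists>l < j. Ds ! j - Ds ! l = {v})"
    using sd unfolding shellable_def by blast
  obtain Ls where Ls: "distinct Ls" "set Ls = facets (link \<Delta> {y})"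
    "\<forall>i j. i < j \<and> j < length Ls \<longrightarrow> (\<exists>v \<in> Ls ! j - Ls ! i. \<exists>l < j. Ls ! j - Ls ! l = {v})"
    using sl unfolding shellable_def by blast
  have facD: "facets \<Delta> = set Ds \<union> insert y ` set Ls"
    using facets_shed[OF fin shed] Ds Ls by simp
  have yD: "\<And>F. F \<in> set Ds \<Longrightarrow> y \<notin> F" using Ds(2) unfolding facets_def del_def by auto
  have yL: "\<And>F. F \<in> set Ls \<Longrightarrow> y \<notin> F" using Ls(2) unfolding facets_def link_def by auto
  define Fs where "Fs = Ds @ map (insert y) Ls"
  have inj: "inj_on (insert y) (set Ls)"
    by (rule inj_onI) (metis Diff_insert_absorb yL)
  have dist: "distinct Fs"
    unfolding Fs_def using Ds(1) Ls(1) inj yD by (auto simp: distinct_map)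
  have setF: "set Fs = facets \<Delta>" unfolding Fs_def facD by simp
  have nth1: "\<And>i. i < length Ds \<Longrightarrow> Fs ! i = Ds ! i" unfolding Fs_def by (simp add: nth_append)
  have nth2: "\<And>i. length Ds \<le> i \<Longrightarrow> i < length Fs \<Longrightarrow> Fs ! i = insert y (Ls ! (i - length Ds))"
    unfolding Fs_def by (simp add: nth_append)
  have lenF: "length Fs = length Ds + length Ls" unfolding Fs_def by simp
  have cond: "\<exists>v \<in> Fs ! j - Fs ! i. \<exists>l < j. Fs ! j - Fs ! l = {v}" if ij: "i < j" "j < length Fs" for i j
  proof -
    consider "j < length Ds" | "length Ds \<le> i" | "i < length Ds" "length Ds \<le> j" by linarith
    then show ?thesis
    proof cases
      case 1
      then obtain v l where "v \<in> Ds ! j - Ds ! i" "l < j" "Ds ! j - Ds ! l = {v}"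
        using Ds(3) ij by blast
      then show ?thesis using 1 ij nth1 by (metis order.strict_trans)
    next
      case 2
      define i' j' where "i' = i - length Ds" "j' = j - length Ds"
      have "i' < j'" "j' < length Ls" using 2 ij lenF unfolding i'_j'_def by auto
      then obtain v l where v: "v \<in> Ls ! j' - Ls ! i'" "l < j'" "Ls ! j' - Ls ! l = {v}"
        using Ls(3) by blast
      have yj: "y \<notin> Ls ! j'" "y \<notin> Ls ! l" using yL \<open>j' < length Ls\<close> v(2) by auto
      have Fj: "Fs ! j = insert y (Ls ! j')" using nth2 2 ij unfolding i'_j'_def by simp
      have Fi: "Fs ! i = insert y (Ls ! i')" using nth2 2 ij unfolding i'_j'_def by simp
      have Fl: "Fs ! (length Ds + l) = insert y (Ls ! l)"
        using nth2[of "length Ds + l"] v(2) \<open>j' < length Ls\<close> lenF by simp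
      have "v \<in> Fs ! j - Fs ! i" using v(1) yj Fi Fj by auto
      moreover have "length Ds + l < j" using v(2) 2 ij unfolding i'_j'_def by simp
      moreover have "Fs ! j - Fs ! (length Ds + l) = {v}" using Fj Fl v(3) yj by auto
      ultimately show ?thesis by blast
    next
      case 3
      have Fi: "y \<notin> Fs ! i" using nth1 3 yD by simp
      have Fj: "Fs ! j \<in> facets \<Delta>" using setF ij by (metis nth_mem)
      have yj: "y \<in> Fs ! j" using nth2 3 ij by simp
      then obtain w where w: "w \<notin> Fs ! j" "insert w (Fs ! j) - {y} \<in> \<Delta>"
        using shed Fj unfolding facets_def by blast
      then obtain H where H: "H \<in> facets \<Delta>" "insert w (Fs ! j) - {y} \<subseteq> H"
        using facet_above[OF fin] by blast
      have yH: "y \<notin> H"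
      proof
        assume "y \<in> H"
        then have "Fs ! j \<subseteq> H" using H(2) by auto
        then have "H = Fs ! j" using Fj H(1) unfolding facets_def by auto
        then show False using H(2) w(1) yj by auto
      qed
      then have "H \<in> set Ds" using H(1) facD by auto
      then obtain l where l: "l < length Ds" "Ds ! l = H" by (metis in_set_conv_nth)
      have "Fs ! j - Fs ! l = {y}" using l nth1 H(2) yH yj by auto
      moreover have "l < j" using l 3 by simp
      ultimately show ?thesis using Fi yj by blast
    qed
  qed
  show ?thesis unfolding shellable_def using dist setF cond by blast
qed

definition cx :: "'a set \<Rightarrow> 'a set set \<Rightarrow> ('a set \<Rightarrow> nat) \<Rightarrow> 'a set set" where
  "cx V Bs c = {A. A \<subseteq> V \<and> (\<forall>B\<in>Bs. card (A \<inter> B) \<le> c B)}"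

definition treelike :: "'a set set \<Rightarrow> bool" where
  "treelike Bs \<longleftrightarrow> (\<forall>C \<subseteq> Bs. C \<noteq> {} \<longrightarrow> (\<exists>B\<in>C. \<exists>y. \<forall>B'\<in>C. B' \<noteq> B \<longrightarrow> B \<inter> B' \<subseteq> {y}))"

lemma shellable_Pow: "shellable (Pow V)"
proof -
  have "facets (Pow V) = {V}" unfolding facets_def by auto
  then show ?thesis unfolding shellable_def by (intro exI[of _ "[V]"]) auto
qed

lemma cx_finite: "finite V \<Longrightarrow> finite (cx V Bs c)"
  unfolding cx_def by (rule finite_subset[of _ "Pow V"]) auto

lemma cx_sub: "finite V \<Longrightarrow> A \<in> cx V Bs c \<Longrightarrow> A' \<subseteq> A \<Longrightarrow> A' \<in> cx V Bs c"
proof -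
  assume a: "finite V" "A \<in> cx V Bs c" "A' \<subseteq> A"
  then have A: "A \<subseteq> V" "\<forall>B\<in>Bs. card (A \<inter> B) \<le> c B" unfolding cx_def by auto
  have "card (A' \<inter> B) \<le> c B" if "B \<in> Bs" for B
  proof -
  from a A that have "card (A' \<inter> B) \<le> card (A \<inter> B)" by (intro card_mono) (auto intro: finite_subset)
  then show "card (A' \<inter> B) \<le> c B" using that A by fastforce
  qed
  then show ?thesis using a A unfolding cx_def by auto
qed

lemma del_cx: "del (cx V Bs c) {y} = cx (V - {y}) Bs c"
  unfolding del_def cx_def by auto

lemma link_cx:
  assumes fin: "finite V" and y: "{y} \<in> cx V Bs c"
  shows "link (cx V Bs c) {y} = cx (V - {y}) Bs (\<lambda>B. c B - (if y \<in> B then 1 else 0))"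
proof (rule set_eqI)
  fix A
  have yV: "y \<in> V" and cy: "\<And>B. B \<in> Bs \<Longrightarrow> y \<in> B \<Longrightarrow> 1 \<le> c B"
    using y unfolding cx_def by auto
  show "A \<in> link (cx V Bs c) {y} \<longleftrightarrow> A \<in> cx (V - {y}) Bs (\<lambda>B. c B - (if y \<in> B then 1 else 0))"
  proof (cases "A \<subseteq> V - {y}")
    case True
    then have finA: "finite A" using fin finite_subset by blast
    have eq: "card ((A \<union> {y}) \<inter> B) = card (A \<inter> B) + (if y \<in> B then 1 else 0)" for B
    proof (cases "y \<in> B")
      case True
      then have "(A \<union> {y}) \<inter> B = insert y (A \<inter> B)" by auto
      moreover have "y \<notin> A \<inter> B" using \<open>A \<subseteq> V - {y}\<close> by auto
      ultimately show ?thesis using True finA by simp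
    next
      case False
      then have "(A \<union> {y}) \<inter> B = A \<inter> B" by auto
      then show ?thesis using False by simp
    qed
    have "A \<in> link (cx V Bs c) {y} \<longleftrightarrow> (\<forall>B\<in>Bs. card ((A \<union> {y}) \<inter> B) \<le> c B)"
      unfolding link_def cx_def using True yV by auto
    also have "\<dots> \<longleftrightarrow> (\<forall>B\<in>Bs. card (A \<inter> B) \<le> c B - (if y \<in> B then 1 else 0))"
      using eq cy by (auto simp: le_diff_conv2)
    also have "\<dots> \<longleftrightarrow> A \<in> cx (V - {y}) Bs (\<lambda>B. c B - (if y \<in> B then 1 else 0))"
      unfolding cx_def using True by auto
    finally show ?thesis .
  next
    case False
    then show ?thesis unfolding link_def cx_def by auto
  qed
qed

lemma core:
  assumes "finite V" and tl: "treelike Bs"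
  shows "k_decomposable k (cx V Bs c) \<and> shellable (cx V Bs c)"
  using assms(1)
proof (induction "card V" arbitrary: V c rule: less_induct)
  case less
  note fin = less.prems(1)
  define C where "C = {B\<in>Bs. c B < card (B \<inter> V)}"
  show ?case
  proof (cases "C = {}")
    case True
    have "cx V Bs c = Pow V"
    proof (rule set_eqI, rule iffI)
      fix A assume "A \<in> Pow V"
      have "card (A \<inter> B) \<le> c B" if "B \<in> Bs" for B
      proof -
        have "card (A \<inter> B) \<le> card (B \<inter> V)"
          using \<open>A \<in> Pow V\<close> fin by (intro card_mono) auto
        moreover have "card (B \<inter> V) \<le> c B" using True that unfolding C_def by auto
        ultimately show ?thesis by simp
      qed
      then show "A \<in> cx V Bs c" using \<open>A \<in> Pow V\<close> unfolding cx_def by auto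
    qed (auto simp: cx_def)
    then show ?thesis using fin shellable_Pow
      by (auto intro!: k_decomposable.simplex simp: is_simplex_def)
  next
    case False
    then obtain B y0 where B: "B \<in> C" and By0: "\<forall>B'\<in>C. B' \<noteq> B \<longrightarrow> B \<inter> B' \<subseteq> {y0}"
      using tl unfolding treelike_def C_def by (metis (no_types, lifting) mem_Collect_eq subsetI)
    have BV: "c B < card (B \<inter> V)" "B \<in> Bs" using B unfolding C_def by auto
    then have "B \<inter> V \<noteq> {}" by auto
    then obtain y where y: "y \<in> B \<inter> V" "\<And>w B'. w \<in> B \<inter> V \<Longrightarrow> w \<noteq> y \<Longrightarrow> B' \<in> C \<Longrightarrow> B' \<noteq> B \<Longrightarrow> w \<notin> B'"
    proof (cases "y0 \<in> B \<inter> V")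
      case True
      then show ?thesis using that[of y0] By0 by blast
    next
      case False
      obtain y where "y \<in> B \<inter> V" using \<open>B \<inter> V \<noteq> {}\<close> by blast
      then show ?thesis using that[of y] By0 False by blast
    qed
    have lt: "card (V - {y}) < card V" using y(1) card_Diff1_less[OF fin] by blast
    show ?thesis
    proof (cases "{y} \<in> cx V Bs c")
      case False
      have "cx V Bs c = cx (V - {y}) Bs c"
      proof (rule set_eqI, rule iffI)
        fix A assume A: "A \<in> cx V Bs c"
        then have "y \<notin> A" using cx_sub[OF fin A, of "{y}"] False by auto
        then show "A \<in> cx (V - {y}) Bs c" using A unfolding cx_def by auto
      qed (auto simp: cx_def)
      then show ?thesis using less.hyps[OF lt] fin by simp
    next
      case True
      have shed: "\<forall>\<tau>\<in>cx V Bs c. y \<in> \<tau> \<longrightarrow> (\<exists>w. w \<notin> \<tau> \<and> insert w \<tau> - {y} \<in> cx V Bs c)"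
      proof (intro ballI impI)
        fix \<tau> assume tau: "\<tau> \<in> cx V Bs c" "y \<in> \<tau>"
        then have tV: "\<tau> \<subseteq> V" and tB: "card (\<tau> \<inter> B) \<le> c B" using BV unfolding cx_def by auto
        have finT: "finite \<tau>" using tV fin finite_subset by blast
        have "\<not> B \<inter> V \<subseteq> \<tau>"
        proof
          assume "B \<inter> V \<subseteq> \<tau>"
          then have "card (B \<inter> V) \<le> card (\<tau> \<inter> B)" using finT by (intro card_mono) auto
          then show False using tB BV by simp
        qed
        then obtain w where w: "w \<in> B \<inter> V" "w \<notin> \<tau>" by blast
        have wy: "w \<noteq> y" using w tau by auto
        have "insert w \<tau> - {y} \<in> cx V Bs c"
          unfolding cx_def
        proof (intro CollectI conjI ballI)
          show "insert w \<tau> - {y} \<subseteq> V" using w tV by auto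
        next
          fix B' assume B': "B' \<in> Bs"
          show "card ((insert w \<tau> - {y}) \<inter> B') \<le> c B'"
          proof (cases "B' = B")
            case True
            have "(insert w \<tau> - {y}) \<inter> B = insert w (\<tau> \<inter> B - {y})" using w wy by auto
            then have "card ((insert w \<tau> - {y}) \<inter> B) = card (\<tau> \<inter> B)"
            proof -
              have f: "finite (\<tau> \<inter> B - {y})" using finT by auto
              have "w \<notin> \<tau> \<inter> B - {y}" using w by auto
              then have "card (insert w (\<tau> \<inter> B - {y})) = Suc (card (\<tau> \<inter> B - {y}))"
                using f by simp
              moreover have "card (\<tau> \<inter> B - {y}) = card (\<tau> \<inter> B) - 1"
                using tau y(1) by (simp add: card_Diff_singleton)
              moreover have "0 < card (\<tau> \<inter> B)" using finT tau y(1) card_gt_0_iff by blast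
              ultimately show ?thesis using \<open>(insert w \<tau> - {y}) \<inter> B = insert w (\<tau> \<inter> B - {y})\<close> by simp
            qed
            then show ?thesis using tB True by simp
          next
            case False
            show ?thesis
            proof (cases "B' \<in> C")
              case True
              have "w \<notin> B'" by (rule y(2)[OF w(1) wy True False])
              then have "card ((insert w \<tau> - {y}) \<inter> B') \<le> card (\<tau> \<inter> B')"
                using finT by (intro card_mono) auto
              then show ?thesis using tau(1) B' unfolding cx_def by fastforce
            next
              case False
              then have "card (B' \<inter> V) \<le> c B'" using B' unfolding C_def by auto
              moreover have "card ((insert w \<tau> - {y}) \<inter> B') \<le> card (B' \<inter> V)"
                using fin w tV by (intro card_mono) auto
              ultimately show ?thesis by simp
            qed
          qed
        qed
        then show "\<exists>w. w \<notin> \<tau> \<and> insert w \<tau> - {y} \<in> cx V Bs c" using w by blast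
      qed
      have IH1: "k_decomposable k (del (cx V Bs c) {y}) \<and> shellable (del (cx V Bs c) {y})"
        unfolding del_cx using less.hyps[OF lt] fin by simp
      have IH2: "k_decomposable k (link (cx V Bs c) {y}) \<and> shellable (link (cx V Bs c) {y})"
        unfolding link_cx[OF fin True] using less.hyps[OF lt] fin by simp
      have sf: "shedding_face (cx V Bs c) {y}" unfolding shedding_face_def using True shed by auto
      have "k_decomposable k (cx V Bs c)"
        by (rule k_decomposable.shed[OF sf _ ]) (use IH1 IH2 in auto)
      moreover have "shellable (cx V Bs c)"
        using shellable_shed[OF cx_finite[OF fin] shed] IH1 IH2 by blast
      ultimately show ?thesis ..
    qed
  qed
qed



lemma adj_sym: "(a,b) \<in> (adj_rel G)\<^sup>* \<Longrightarrow> (b,a) \<in> (adj_rel G)\<^sup>*"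
proof -
  have "sym (adj_rel G)" unfolding adj_rel_def sym_def by (auto simp: insert_commute)
  then have "sym ((adj_rel G)\<^sup>*)" by (rule sym_rtrancl)
  then show "(a,b) \<in> (adj_rel G)\<^sup>* \<Longrightarrow> (b,a) \<in> (adj_rel G)\<^sup>*" by (rule symD)
qed

lemma adj_mono: "G \<subseteq> G' \<Longrightarrow> (a,b) \<in> (adj_rel G)\<^sup>* \<Longrightarrow> (a,b) \<in> (adj_rel G')\<^sup>*"
proof -
  assume "G \<subseteq> G'" "(a,b) \<in> (adj_rel G)\<^sup>*"
  moreover have "adj_rel G \<subseteq> adj_rel G'" using \<open>G \<subseteq> G'\<close> unfolding adj_rel_def by auto
  ultimately show ?thesis using rtrancl_mono by blast
qed

lemma path_conn:
  "a \<le> b \<Longrightarrow> (\<forall>k. a \<le> k \<and> k < b \<longrightarrow> {f k, f (Suc k)} \<in> G) \<Longrightarrow> (f a, f b) \<in> (adj_rel G)\<^sup>*"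
proof (induction b)
  case 0
  then show ?case by simp
next
  case (Suc b)
  show ?case
  proof (cases "a = Suc b")
    case True
    then show ?thesis by simp
  next
    case False
    then have "a \<le> b" using Suc.prems by simp
    then have "(f a, f b) \<in> (adj_rel G)\<^sup>*" using Suc by simp
    moreover have "(f b, f (Suc b)) \<in> adj_rel G" using Suc.prems \<open>a \<le> b\<close> unfolding adj_rel_def by simp
    ultimately show ?thesis by (rule rtrancl_into_rtrancl)
  qed
qed

lemma conn_join:
  assumes "h \<in> W" "\<forall>a\<in>W. (a,h) \<in> (adj_rel G)\<^sup>*"
  shows "connected_graph W G"
  unfolding connected_graph_def
proof (intro conjI ballI)
  show "W \<noteq> {}" using assms(1) by auto
next
  fix x y assume "x \<in> W" "y \<in> W"
  then have "(x,h) \<in> (adj_rel G)\<^sup>*" "(y,h) \<in> (adj_rel G)\<^sup>*" using assms(2) by auto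
  then have "(x,h) \<in> (adj_rel G)\<^sup>*" "(h,y) \<in> (adj_rel G)\<^sup>*" using adj_sym by auto
  then show "(x,y) \<in> (adj_rel G)\<^sup>*" by (rule rtrancl_trans)
qed

lemma conn_in_sub:
  assumes "is_subgraph W F V E" "biconn W F" "x \<in> W" "y \<in> W" "x \<noteq> v" "y \<noteq> v"
  shows "(x,y) \<in> (adj_rel {e\<in>F. v \<notin> e})\<^sup>*"
proof (cases "v \<in> W")
  case True
  have "W - {v} \<noteq> {}" using assms(3,5) by blast
  then have "connected_graph (W - {v}) {e\<in>F. v \<notin> e}" using assms(2) True unfolding biconn_def by blast
  moreover have "x \<in> W - {v}" "y \<in> W - {v}" using assms(3-6) by auto
  ultimately show ?thesis unfolding connected_graph_def by blast
next
  case False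
  have "\<forall>e\<in>F. e \<subseteq> W" using assms(1) unfolding is_subgraph_def by blast
  then have "{e\<in>F. v \<notin> e} = F" using False by blast
  moreover have "(x,y) \<in> (adj_rel F)\<^sup>*" using assms(2,3,4) unfolding biconn_def connected_graph_def by blast
  ultimately show ?thesis by simp
qed

lemma conn_in_sub0:
  assumes "biconn W F" "x \<in> W" "y \<in> W"
  shows "(x,y) \<in> (adj_rel F)\<^sup>*"
proof -
  have "connected_graph W F" using assms(1) unfolding biconn_def by blast
  then show ?thesis using assms(2,3) unfolding connected_graph_def by blast
qed

lemma block_share2:
  assumes b1: "is_block V E W1 F1" and b2: "is_block V E W2 F2"
    and ab: "a \<in> W1" "a \<in> W2" "b \<in> W1" "b \<in> W2" "a \<noteq> b"
  shows "W1 = W2"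
proof -
  have s1: "is_subgraph W1 F1 V E" "biconn W1 F1" and s2: "is_subgraph W2 F2 V E" "biconn W2 F2"
    using b1 b2 unfolding is_block_def by auto
  have sub: "is_subgraph (W1 \<union> W2) (F1 \<union> F2) V E" using s1 s2 unfolding is_subgraph_def by auto
  have con: "connected_graph (W1 \<union> W2) (F1 \<union> F2)"
  proof (rule conn_join[of a])
    show "a \<in> W1 \<union> W2" using ab by simp
    show "\<forall>x\<in>W1 \<union> W2. (x, a) \<in> (adj_rel (F1 \<union> F2))\<^sup>*"
    proof
      fix x assume "x \<in> W1 \<union> W2"
      then show "(x, a) \<in> (adj_rel (F1 \<union> F2))\<^sup>*"
      proof
        assume "x \<in> W1" then show ?thesis using conn_in_sub0[OF s1(2) _ ab(1)] adj_mono[of F1 "F1 \<union> F2"] by blast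
      next
        assume "x \<in> W2" then show ?thesis using conn_in_sub0[OF s2(2) _ ab(2)] adj_mono[of F2 "F1 \<union> F2"] by blast
      qed
    qed
  qed
  have "biconn (W1 \<union> W2) (F1 \<union> F2)"
    unfolding biconn_def
  proof (intro conjI ballI impI)
    show "connected_graph (W1 \<union> W2) (F1 \<union> F2)" by (rule con)
  next
    fix v assume "v \<in> W1 \<union> W2"
    define h where "h = (if a \<noteq> v then a else b)"
    have h: "h \<in> W1" "h \<in> W2" "h \<noteq> v" using ab unfolding h_def by auto
    have m1: "{e\<in>F1. v \<notin> e} \<subseteq> {e\<in>F1 \<union> F2. v \<notin> e}" and m2: "{e\<in>F2. v \<notin> e} \<subseteq> {e\<in>F1 \<union> F2. v \<notin> e}" by auto
    show "connected_graph (W1 \<union> W2 - {v}) {e\<in>F1 \<union> F2. v \<notin> e}"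
    proof (rule conn_join[of h])
      show "h \<in> W1 \<union> W2 - {v}" using h by simp
      show "\<forall>x\<in>W1 \<union> W2 - {v}. (x, h) \<in> (adj_rel {e\<in>F1 \<union> F2. v \<notin> e})\<^sup>*"
      proof
        fix x assume x: "x \<in> W1 \<union> W2 - {v}"
        show "(x, h) \<in> (adj_rel {e\<in>F1 \<union> F2. v \<notin> e})\<^sup>*"
        proof (cases "x \<in> W1")
          case True
          then show ?thesis using conn_in_sub[OF s1 True h(1)] x h adj_mono[OF m1] by blast
        next
          case False
          then have "x \<in> W2" using x by simp
          then show ?thesis using conn_in_sub[OF s2 _ h(2)] x h adj_mono[OF m2] by blast
        qed
      qed
    qed
  qed
  then have "W1 \<union> W2 = W1" "W1 \<union> W2 = W2" using b1 b2 sub unfolding is_block_def by blast+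
  then show ?thesis by simp
qed

lemma simple_graph_finE: "simple_graph V E \<Longrightarrow> finite E"
proof -
  assume a: "simple_graph V E"
  then have "E \<subseteq> Pow V" "finite V" unfolding simple_graph_def by auto
  then show "finite E" by (simp add: finite_subset)
qed

lemma block_exists:
  assumes sg: "simple_graph V E" and KV: "K \<subseteq> V" and Kne: "K \<noteq> {}" and cl: "is_clique E K"
  shows "\<exists>W F. is_block V E W F \<and> K \<subseteq> W"
proof -
  define FK where "FK = {e. \<exists>a b. e = {a,b} \<and> a \<in> K \<and> b \<in> K \<and> a \<noteq> b}"
  have subK: "is_subgraph K FK V E"
    unfolding is_subgraph_def FK_def using KV cl unfolding is_clique_def by auto
  have connK: "connected_graph U {e\<in>FK. v \<notin> e}" if "U \<subseteq> K" "U \<noteq> {}" "v \<notin> U" for U v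
    unfolding connected_graph_def
  proof (intro conjI ballI)
    show "U \<noteq> {}" by (rule that(2))
  next
    fix x y assume xy: "x \<in> U" "y \<in> U"
    show "(x, y) \<in> (adj_rel {e\<in>FK. v \<notin> e})\<^sup>*"
    proof (cases "x = y")
      case True then show ?thesis by simp
    next
      case False
      have "{x,y} \<in> {e\<in>FK. v \<notin> e}" unfolding FK_def using xy that False by blast
      then have "(x,y) \<in> adj_rel {e\<in>FK. v \<notin> e}" unfolding adj_rel_def by simp
      then show ?thesis by (rule r_into_rtrancl)
    qed
  qed
  have biK: "biconn K FK"
    unfolding biconn_def
  proof (intro conjI ballI impI)
    show "connected_graph K FK"
      unfolding connected_graph_def
    proof (intro conjI ballI)
      show "K \<noteq> {}" by (rule Kne)
    next
      fix x y assume xy: "x \<in> K" "y \<in> K"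
      show "(x, y) \<in> (adj_rel FK)\<^sup>*"
      proof (cases "x = y")
        case True then show ?thesis by simp
      next
        case False
        have "{x,y} \<in> FK" unfolding FK_def using xy False by blast
        then have "(x,y) \<in> adj_rel FK" unfolding adj_rel_def by simp
        then show ?thesis by (rule r_into_rtrancl)
      qed
    qed
  next
    fix v assume "v \<in> K" "K - {v} \<noteq> {}"
    show "connected_graph (K - {v}) {e\<in>FK. v \<notin> e}" by (rule connK) (use \<open>K - {v} \<noteq> {}\<close> in auto)
  qed
  define S where "S = {(W,F). is_subgraph W F V E \<and> biconn W F \<and> K \<subseteq> W}"
  have finV: "finite V" using sg unfolding simple_graph_def by simp
  have finE: "finite E" using simple_graph_finE[OF sg] .
  have "S \<subseteq> Pow V \<times> Pow E" unfolding S_def is_subgraph_def by auto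
  then have finS: "finite S" using finV finE by (simp add: finite_subset)
  have KS: "(K, FK) \<in> S" unfolding S_def using subK biK by simp
  define g where "g = (\<lambda>(W::'a set, F::'a set set). card W + card F)"
  define M where "M = Max (g ` S)"
  have "M \<in> g ` S" unfolding M_def using finS KS by (intro Max_in) auto
  then obtain W F where WF: "(W,F) \<in> S" "g (W,F) = M" by auto
  have Mge: "\<And>s. s \<in> S \<Longrightarrow> g s \<le> M" unfolding M_def using finS by simp
  have max: "\<forall>W' F'. is_subgraph W' F' V E \<and> biconn W' F' \<and> W \<subseteq> W' \<and> F \<subseteq> F'
        \<longrightarrow> W' = W \<and> F' = F"
  proof (intro allI impI)
    fix W' F' assume a: "is_subgraph W' F' V E \<and> biconn W' F' \<and> W \<subseteq> W' \<and> F \<subseteq> F'"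
    then have "(W',F') \<in> S" using WF unfolding S_def by auto
    then have le: "card W' + card F' \<le> card W + card F" using Mge WF unfolding g_def by fastforce
    have fW': "finite W'" and fF': "finite F'" using a finV finE unfolding is_subgraph_def by (auto intro: finite_subset)
    have "card W \<le> card W'" "card F \<le> card F'" using a fW' fF' by (auto intro: card_mono)
    then have "card W = card W'" "card F = card F'" using le by auto
    then show "W' = W \<and> F' = F" using a fW' fF' card_subset_eq by metis
  qed
  have "is_subgraph W F V E" "biconn W F" using WF unfolding S_def by auto
  then have "is_block V E W F" using max unfolding is_block_def by blast
  moreover have "K \<subseteq> W" using WF unfolding S_def by auto
  ultimately show ?thesis by blast
qed

lemma ear:
  assumes blk: "is_block V E W F" and n: "2 \<le> n" and f0: "f 0 \<in> W" and fn: "f n \<in> W"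
    and inj: "inj_on f {0..n}" and out: "\<And>k. 0 < k \<Longrightarrow> k < n \<Longrightarrow> f k \<notin> W"
    and inV: "\<And>k. k \<le> n \<Longrightarrow> f k \<in> V" and edges: "\<And>k. k < n \<Longrightarrow> {f k, f (Suc k)} \<in> E"
  shows False
proof -
  have sW: "is_subgraph W F V E" and bW: "biconn W F" using blk unfolding is_block_def by auto
  define W' where "W' = W \<union> f ` {0..n}"
  define P where "P = (\<lambda>k. {f k, f (Suc k)}) ` {..<n}"
  define F' where "F' = F \<union> P"
  have sub: "is_subgraph W' F' V E"
    using sW inV edges unfolding is_subgraph_def W'_def F'_def P_def by auto
  have PF: "\<And>k. k < n \<Longrightarrow> {f k, f (Suc k)} \<in> F'" unfolding F'_def P_def by auto
  have f0n: "f 0 \<noteq> f n" using inj n unfolding inj_on_def by fastforce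
  have con: "connected_graph W' F'"
  proof (rule conn_join[of "f 0"])
    show "f 0 \<in> W'" unfolding W'_def by simp
    show "\<forall>x\<in>W'. (x, f 0) \<in> (adj_rel F')\<^sup>*"
    proof
      fix x assume "x \<in> W'"
      then consider "x \<in> W" | k where "k \<le> n" "x = f k" unfolding W'_def by auto
      then show "(x, f 0) \<in> (adj_rel F')\<^sup>*"
      proof cases
        case 1
        then have "(x, f 0) \<in> (adj_rel F)\<^sup>*" using conn_in_sub0[OF bW 1 f0] by simp
        then show ?thesis using adj_mono[of F F'] unfolding F'_def by blast
      next
        case 2
        have "(f 0, f k) \<in> (adj_rel F')\<^sup>*" by (rule path_conn) (use PF 2 in auto)
        then have "(f k, f 0) \<in> (adj_rel F')\<^sup>*" by (rule adj_sym)
        then show ?thesis using 2(2) by simp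
      qed
    qed
  qed
  have "biconn W' F'"
    unfolding biconn_def
  proof (intro conjI ballI impI)
    show "connected_graph W' F'" by (rule con)
  next
    fix v assume "v \<in> W'"
    define Gv where "Gv = {e\<in>F'. v \<notin> e}"
    define h where "h = (if f 0 \<noteq> v then f 0 else f n)"
    have h: "h \<in> W" "h \<noteq> v" using f0 fn f0n unfolding h_def by auto
    have mG: "{e\<in>F. v \<notin> e} \<subseteq> Gv" unfolding Gv_def F'_def by auto
    have toh: "(x, h) \<in> (adj_rel Gv)\<^sup>*" if "x \<in> W" "x \<noteq> v" for x
      using conn_in_sub[OF sW bW that(1) h(1) that(2) h(2)] adj_mono[OF mG] by blast
    show "connected_graph (W' - {v}) {e\<in>F'. v \<notin> e}"
      unfolding Gv_def[symmetric]
    proof (rule conn_join[of h])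
      show "h \<in> W' - {v}" using h unfolding W'_def by simp
      show "\<forall>x\<in>W' - {v}. (x, h) \<in> (adj_rel Gv)\<^sup>*"
      proof
        fix x assume x: "x \<in> W' - {v}"
        show "(x, h) \<in> (adj_rel Gv)\<^sup>*"
        proof (cases "x \<in> W")
          case True
          then show ?thesis using toh x by simp
        next
          case False
          then obtain k where k: "k \<le> n" "x = f k" using x unfolding W'_def by auto
          show ?thesis
          proof (cases "v \<in> f ` {0..k}")
            case False
            have "(f 0, f k) \<in> (adj_rel Gv)\<^sup>*"
            proof (rule path_conn)
              show "\<forall>m. 0 \<le> m \<and> m < k \<longrightarrow> {f m, f (Suc m)} \<in> Gv"
              proof (intro allI impI)
                fix m assume m: "0 \<le> m \<and> m < k"
                have "f m \<noteq> v" "f (Suc m) \<noteq> v" using False m by auto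
                then show "{f m, f (Suc m)} \<in> Gv" unfolding Gv_def using PF m k by auto
              qed
            qed simp
            moreover have "f 0 \<noteq> v" using False by auto
            then have "(f 0, h) \<in> (adj_rel Gv)\<^sup>*" using toh f0 by simp
            ultimately have "(f k, f 0) \<in> (adj_rel Gv)\<^sup>*" "(f 0, h) \<in> (adj_rel Gv)\<^sup>*"
              using adj_sym by auto
            then have "(f k, h) \<in> (adj_rel Gv)\<^sup>*" by (rule rtrancl_trans)
            then show ?thesis using k(2) by simp
          next
            case True
            then obtain m where m: "m \<le> k" "v = f m" by auto
            have "m \<noteq> k" using m k x by auto
            have nv: "v \<notin> f ` {k..n}"
            proof
              assume "v \<in> f ` {k..n}"
              then obtain m' where "m' \<in> {k..n}" "f m' = f m" using m by auto
              then have "m' = m" using inj m k unfolding inj_on_def by (meson atLeastAtMost_iff le_trans zero_le)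
              then show False using \<open>m' \<in> {k..n}\<close> m \<open>m \<noteq> k\<close> by auto
            qed
            have "(f k, f n) \<in> (adj_rel Gv)\<^sup>*"
            proof (rule path_conn)
              show "\<forall>m. k \<le> m \<and> m < n \<longrightarrow> {f m, f (Suc m)} \<in> Gv"
              proof (intro allI impI)
                fix m assume m: "k \<le> m \<and> m < n"
                have "f m \<noteq> v" "f (Suc m) \<noteq> v" using nv m by auto
                then show "{f m, f (Suc m)} \<in> Gv" unfolding Gv_def using PF m by auto
              qed
            qed (use k in simp)
            moreover have "f n \<noteq> v" using nv k by auto
            then have "(f n, h) \<in> (adj_rel Gv)\<^sup>*" using toh fn by simp
            ultimately have "(f k, h) \<in> (adj_rel Gv)\<^sup>*" by (rule rtrancl_trans)
            then show ?thesis using k(2) by simp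
          qed
        qed
      qed
    qed
  qed
  moreover have "W \<subseteq> W'" "F \<subseteq> F'" unfolding W'_def F'_def by auto
  ultimately have "W' = W" using blk sub unfolding is_block_def by blast
  moreover have "f 1 \<in> W'" using n unfolding W'_def by auto
  moreover have "f 1 \<notin> W" using out[of 1] n by simp
  ultimately show False by simp
qed

lemma block_graph_complete:
  assumes "block_graph V E" "is_block V E W F" "x \<in> W" "y \<in> W" "x \<noteq> y"
  shows "{x, y} \<in> E"
proof -
  have "complete_graph W F" using assms(1,2) unfolding block_graph_def by blast
  then have "{x,y} \<in> F" using assms(3-5) unfolding complete_graph_def by blast
  moreover have "F \<subseteq> E" using assms(2) unfolding is_block_def is_subgraph_def by blast
  ultimately show ?thesis by blast
qed

lemma edge_neq: "simple_graph V E \<Longrightarrow> {a, b} \<in> E \<Longrightarrow> a \<noteq> b"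
proof
  assume "simple_graph V E" "{a, b} \<in> E" "a = b"
  then have "card {a, b} = 2" unfolding simple_graph_def by blast
  then show False using \<open>a = b\<close> by simp
qed

lemma no_straight_walk:
  assumes bg: "block_graph V E" and uV: "\<And>k. u k \<in> V" and ue: "\<And>k. {u k, u (Suc k)} \<in> E"
    and st: "\<And>k. u k \<noteq> u (Suc (Suc k)) \<and> {u k, u (Suc (Suc k))} \<notin> E"
  shows False
proof -
  have sg: "simple_graph V E" using bg unfolding block_graph_def by blast
  have finV: "finite V" using sg unfolding simple_graph_def by blast
  have uneq: "\<And>k. u k \<noteq> u (Suc k)" using edge_neq[OF sg ue] by blast
  have "\<not> inj_on u {..card V}"
  proof
    assume "inj_on u {..card V}"
    then have "card (u ` {..card V}) = Suc (card V)" by (simp add: card_image)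
    moreover have "card (u ` {..card V}) \<le> card V" using uV finV by (intro card_mono) auto
    ultimately show False by simp
  qed
  then obtain i0 j0 where ij0: "i0 < j0" "u i0 = u j0"
    unfolding inj_on_def by (metis linorder_neqE_nat)
  define Q where "Q = (\<lambda>i j. i + 2 \<le> j \<and> (u i = u j \<or> {u i, u j} \<in> E))"
  have "j0 \<noteq> Suc i0" using uneq ij0 by auto
  then have "Q i0 (i0 + (j0 - i0))" unfolding Q_def using ij0 by auto
  then have "\<exists>d. \<exists>i. Q i (i + d)" by blast
  then obtain d where dQ: "\<exists>i. Q i (i + d)" and dmin: "\<And>d'. d' < d \<Longrightarrow> \<not> (\<exists>i. Q i (i + d'))"
    unfolding exists_least_iff[of "\<lambda>d. \<exists>i. Q i (i + d)"] by blast
  obtain i where Qi: "Q i (i + d)" using dQ by blast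
  define j where "j = i + d"
  have d2: "2 \<le> d" using Qi unfolding Q_def by simp
  have "d \<noteq> 2" using Qi st[of i] unfolding Q_def by (auto simp: numeral_2_eq_2)
  then have d3: "3 \<le> d" using d2 by simp
  have noQ: "u a \<noteq> u b \<and> {u a, u b} \<notin> E" if "a + 2 \<le> b" "b - a < d" for a b
  proof -
    have "\<not> Q a (a + (b - a))" using dmin[OF that(2)] by blast
    then show ?thesis unfolding Q_def using that by auto
  qed
  have dist: "u a \<noteq> u b" if "a < b" "b - a < d" for a b
  proof (cases "b = Suc a")
    case True then show ?thesis using uneq by simp
  next
    case False then show ?thesis using noQ[of a b] that by simp
  qed
  have Qij: "u i = u j \<or> {u i, u j} \<in> E" using Qi unfolding Q_def j_def by simp
  have cl: "is_clique E {u i, u (Suc i)}"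
    unfolding is_clique_def using ue[of i] by (auto simp: insert_commute)
  obtain W F where blk: "is_block V E W F" and WK: "{u i, u (Suc i)} \<subseteq> W"
    using block_exists[OF sg _ _ cl] uV by blast
  have Wc: "\<And>x y. x \<in> W \<Longrightarrow> y \<in> W \<Longrightarrow> x \<noteq> y \<Longrightarrow> {x, y} \<in> E"
    using block_graph_complete[OF bg blk] by blast
  define n where "n = (if u i = u j then d - 1 else d)"
  define f where "f = (\<lambda>k. if k < d then u (Suc i + k) else u i)"
  have nd: "n \<le> d" "d - 1 \<le> n" unfolding n_def by auto
  have ne: "n = d \<Longrightarrow> u i \<noteq> u j" unfolding n_def using d3 by auto
  show False
  proof (rule ear[OF blk, of n f])
    show "2 \<le> n" using d3 nd by simp
    show "f 0 \<in> W" unfolding f_def using d3 WK by simp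
    show "f n \<in> W"
    proof (cases "u i = u j")
      case True
      then have "n = d - 1" unfolding n_def by simp
      then have "f n = u j" unfolding f_def j_def using d3 by simp
      then show ?thesis using True WK by simp
    next
      case False
      then show ?thesis unfolding f_def n_def using WK by simp
    qed
    have fneq: "f a \<noteq> f b" if "a < b" "b \<le> n" for a b
    proof (cases "b < d")
      case True
      then have "f a = u (Suc i + a)" "f b = u (Suc i + b)" using that unfolding f_def by auto
      moreover have "u (Suc i + a) \<noteq> u (Suc i + b)" using dist[of "Suc i + a" "Suc i + b"] that True by simp
      ultimately show ?thesis by simp
    next
      case False
      then have bd: "b = d" "n = d" using that nd by auto
      then have "f a = u (Suc i + a)" "f b = u i" using that unfolding f_def by auto
      moreover have "u i \<noteq> u (Suc i + a)"
      proof (cases "Suc a < d")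
        case True
        then show ?thesis using dist[of i "Suc i + a"] by simp
      next
        case False
        then have "Suc i + a = j" using that bd unfolding j_def by simp
        then show ?thesis using ne bd by simp
      qed
      ultimately show ?thesis by simp
    qed
    show "inj_on f {0..n}"
    proof (rule inj_onI)
      fix a b assume "a \<in> {0..n}" "b \<in> {0..n}" "f a = f b"
      then show "a = b" using fneq[of a b] fneq[of b a] by (metis atLeastAtMost_iff linorder_neqE_nat)
    qed
    show "f k \<notin> W" if "0 < k" "k < n" for k
    proof
      assume fk: "f k \<in> W"
      have kd: "k < d" using that nd by simp
      then have fk': "f k = u (Suc i + k)" unfolding f_def by simp
      show False
      proof (cases "Suc k < d")
        case True
        have "u i \<noteq> u (Suc i + k) \<and> {u i, u (Suc i + k)} \<notin> E" using noQ[of i "Suc i + k"] True that by simp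
        moreover have "{u i, u (Suc i + k)} \<in> E" using Wc[of "u i" "u (Suc i + k)"] fk fk' WK calculation by auto
        ultimately show False by simp
      next
        case False
        then have "Suc i + k = j" using kd unfolding j_def by simp
        have "u (Suc i) \<noteq> u j \<and> {u (Suc i), u j} \<notin> E" using noQ[of "Suc i" j] d3 unfolding j_def by simp
        moreover have "{u (Suc i), u j} \<in> E" using Wc[of "u (Suc i)" "u j"] fk fk' WK calculation \<open>Suc i + k = j\<close> by auto
        ultimately show False by simp
      qed
    qed
    show "f k \<in> V" if "k \<le> n" for k unfolding f_def using uV by simp
    show "{f k, f (Suc k)} \<in> E" if "k < n" for k
    proof (cases "Suc k < d")
      case True
      then show ?thesis unfolding f_def using ue[of "Suc i + k"] by simp
    next
      case False
      then have "Suc k = d" "n = d" using that nd by auto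
      then have "f k = u j" "f (Suc k) = u i" unfolding f_def j_def by auto
      moreover have "{u i, u j} \<in> E" using Qij ne \<open>n = d\<close> by auto
      ultimately show ?thesis by (simp add: insert_commute)
    qed
  qed
qed

lemma blocks_treelike:
  assumes bg: "block_graph V E"
  shows "treelike {W. \<exists>F. is_block V E W F}"
  unfolding treelike_def
proof (intro allI impI)
  fix C assume CB: "C \<subseteq> {W. \<exists>F. is_block V E W F}" and Cne: "C \<noteq> {}"
  have sg: "simple_graph V E" using bg unfolding block_graph_def by blast
  show "\<exists>B\<in>C. \<exists>y. \<forall>B'\<in>C. B' \<noteq> B \<longrightarrow> B \<inter> B' \<subseteq> {y}"
  proof (rule ccontr)
    assume neg: "\<not> (\<exists>B\<in>C. \<exists>y. \<forall>B'\<in>C. B' \<noteq> B \<longrightarrow> B \<inter> B' \<subseteq> {y})"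
    have stp: "\<exists>p'. fst p' \<in> C \<and> fst p' \<noteq> fst p \<and> snd p' \<in> fst p \<and> snd p' \<in> fst p' \<and> snd p' \<noteq> snd p"
      if "fst p \<in> C" for p
    proof -
      have "\<not> (\<forall>B'\<in>C. B' \<noteq> fst p \<longrightarrow> fst p \<inter> B' \<subseteq> {snd p})" using that neg by blast
      then obtain B' where "B' \<in> C" "B' \<noteq> fst p" "\<not> fst p \<inter> B' \<subseteq> {snd p}" by blast
      then obtain x' where "x' \<in> fst p" "x' \<in> B'" "x' \<noteq> snd p" by blast
      then show ?thesis using \<open>B' \<in> C\<close> \<open>B' \<noteq> fst p\<close> by (intro exI[of _ "(B', x')"]) auto
    qed
    define nxt where "nxt = (\<lambda>p::'a set \<times> 'a. SOME p'. fst p' \<in> C \<and> fst p' \<noteq> fst p \<and> snd p' \<in> fst p \<and> snd p' \<in> fst p' \<and> snd p' \<noteq> snd p)"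
    have nxtP: "fst (nxt p) \<in> C \<and> fst (nxt p) \<noteq> fst p \<and> snd (nxt p) \<in> fst p \<and> snd (nxt p) \<in> fst (nxt p) \<and> snd (nxt p) \<noteq> snd p"
      if "fst p \<in> C" for p
      unfolding nxt_def by (rule someI_ex[OF stp[OF that]])
    obtain B0 where "B0 \<in> C" using Cne by blast
    define s where "s = (\<lambda>k. (nxt ^^ k) (B0, undefined))"
    have sS: "s (Suc k) = nxt (s k)" for k unfolding s_def by simp
    have sC: "fst (s k) \<in> C" for k
    proof (induction k)
      case 0 then show ?case unfolding s_def using \<open>B0 \<in> C\<close> by simp
    next
      case (Suc k) then show ?case using nxtP[OF Suc] unfolding sS by blast
    qed
    define Bk where "Bk = (\<lambda>k. fst (s k))"
    define u where "u = (\<lambda>k. snd (s (Suc k)))"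
    have P: "Bk (Suc k) \<noteq> Bk k" "u k \<in> Bk k" "u k \<in> Bk (Suc k)" for k
      using nxtP[OF sC[of k]] unfolding Bk_def u_def sS[of k] by blast+
    have uS: "u (Suc k) \<noteq> u k" for k
      using nxtP[OF sC[of "Suc k"]] unfolding u_def sS[of "Suc k"] by blast
    have blkk: "\<exists>F. is_block V E (Bk k) F" for k using sC[of k] CB unfolding Bk_def by blast
    have BV: "Bk k \<subseteq> V" for k
    proof -
      obtain F where "is_block V E (Bk k) F" using blkk[of k] by blast
      then have "is_subgraph (Bk k) F V E" unfolding is_block_def by blast
      then show ?thesis unfolding is_subgraph_def by blast
    qed
    have share: "Bk k = Bk k'" if "a \<in> Bk k" "a \<in> Bk k'" "b \<in> Bk k" "b \<in> Bk k'" "a \<noteq> b" for k k' a b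
    proof -
      obtain F where F: "is_block V E (Bk k) F" using blkk[of k] by blast
      obtain F' where F': "is_block V E (Bk k') F'" using blkk[of k'] by blast
      show ?thesis by (rule block_share2[OF F F' that])
    qed
    have edge: "{x, y} \<in> E" if "x \<in> Bk k" "y \<in> Bk k" "x \<noteq> y" for x y k
    proof -
      obtain F where F: "is_block V E (Bk k) F" using blkk[of k] by blast
      show ?thesis by (rule block_graph_complete[OF bg F that])
    qed
    show False
    proof (rule no_straight_walk[OF bg, of u])
      show "u k \<in> V" for k using P(2)[of k] BV[of k] by blast
      show "{u k, u (Suc k)} \<in> E" for k using edge[OF P(3)[of k] P(2)[of "Suc k"]] uS[of k] by simp
      show "u k \<noteq> u (Suc (Suc k)) \<and> {u k, u (Suc (Suc k))} \<notin> E" for k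
      proof
        show "u k \<noteq> u (Suc (Suc k))"
        proof
          assume eq: "u k = u (Suc (Suc k))"
          have "Bk (Suc k) = Bk (Suc (Suc k))"
            using share[of "u k" "Suc k" "Suc (Suc k)" "u (Suc k)"] P(3)[of k] P(2)[of "Suc k"] P(3)[of "Suc k"]
              P(2)[of "Suc (Suc k)"] eq uS[of k] by auto
          then show False using P(1)[of "Suc k"] by simp
        qed
        then have ne: "u k \<noteq> u (Suc (Suc k))" .
        show "{u k, u (Suc (Suc k))} \<notin> E"
        proof
          assume e: "{u k, u (Suc (Suc k))} \<in> E"
          have e1: "{u k, u (Suc k)} \<in> E" using edge[OF P(3)[of k] P(2)[of "Suc k"]] uS[of k] by simp
          have e2: "{u (Suc k), u (Suc (Suc k))} \<in> E"
            using edge[OF P(3)[of "Suc k"] P(2)[of "Suc (Suc k)"]] uS[of "Suc k"] by simp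
          have cl: "is_clique E {u k, u (Suc k), u (Suc (Suc k))}"
            unfolding is_clique_def using e e1 e2 by (auto simp: insert_commute)
          have "{u k, u (Suc k), u (Suc (Suc k))} \<subseteq> V" using P(2) BV by blast
          then obtain W F where W: "is_block V E W F" "{u k, u (Suc k), u (Suc (Suc k))} \<subseteq> W"
            using block_exists[OF sg _ _ cl] by blast
          obtain F1 where F1: "is_block V E (Bk (Suc k)) F1" using blkk by blast
          obtain F2 where F2: "is_block V E (Bk (Suc (Suc k))) F2" using blkk by blast
          have "W = Bk (Suc k)"
            by (rule block_share2[OF W(1) F1, of "u k" "u (Suc k)"]) (use W(2) P(3)[of k] P(2)[of "Suc k"] uS[of k] in auto)
          moreover have "W = Bk (Suc (Suc k))"
            by (rule block_share2[OF W(1) F2, of "u (Suc k)" "u (Suc (Suc k))"])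
              (use W(2) P(3)[of "Suc k"] P(2)[of "Suc (Suc k)"] uS[of "Suc k"] in auto)
          ultimately show False using P(1)[of "Suc k"] by simp
        qed
      qed
    qed
  qed
qed

lemma CF_eq:
  assumes t: "t \<ge> 3" and bg: "block_graph V E"
  shows "CF t V E = cx V {W. \<exists>F. is_block V E W F} (\<lambda>_. t - 1)"
proof (rule set_eqI, rule iffI)
  have sg: "simple_graph V E" using bg unfolding block_graph_def by blast
  have finV: "finite V" using sg unfolding simple_graph_def by blast
  fix A assume A: "A \<in> CF t V E"
  then have AV: "A \<subseteq> V" and noK: "\<not> (\<exists>K\<subseteq>A. card K = t \<and> is_clique E K)" unfolding CF_def by auto
  have "card (A \<inter> W) \<le> t - 1" if "is_block V E W F" for W F
  proof (rule ccontr)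
    assume "\<not> card (A \<inter> W) \<le> t - 1"
    then have "t \<le> card (A \<inter> W)" by simp
    moreover have "finite (A \<inter> W)" using AV finV by (auto intro: finite_subset)
    ultimately obtain K where K: "K \<subseteq> A \<inter> W" "card K = t" using obtain_subset_with_card_n by metis
    have "is_clique E K" unfolding is_clique_def
      using block_graph_complete[OF bg that] K(1) by blast
    then show False using noK K by blast
  qed
  then show "A \<in> cx V {W. \<exists>F. is_block V E W F} (\<lambda>_. t - 1)" unfolding cx_def using AV by blast
next
  have sg: "simple_graph V E" using bg unfolding block_graph_def by blast
  have finV: "finite V" using sg unfolding simple_graph_def by blast
  fix A assume A: "A \<in> cx V {W. \<exists>F. is_block V E W F} (\<lambda>_. t - 1)"
  then have AV: "A \<subseteq> V" and cA: "\<And>W F. is_block V E W F \<Longrightarrow> card (A \<inter> W) \<le> t - 1" unfolding cx_def by auto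
  have "\<not> (\<exists>K\<subseteq>A. card K = t \<and> is_clique E K)"
  proof
    assume "\<exists>K\<subseteq>A. card K = t \<and> is_clique E K"
    then obtain K where K: "K \<subseteq> A" "card K = t" "is_clique E K" by blast
    have "K \<noteq> {}" using K(2) t by auto
    then obtain W F where W: "is_block V E W F" "K \<subseteq> W" using block_exists[OF sg _ _ K(3)] K(1) AV by blast
    have "finite (A \<inter> W)" using AV finV by (auto intro: finite_subset)
    then have "card K \<le> card (A \<inter> W)" using K(1) W(2) by (intro card_mono) auto
    then show False using cA[OF W(1)] K(2) t by simp
  qed
  then show "A \<in> CF t V E" unfolding CF_def using AV by blast
qed

theorem corollary3p4:
  fixes V :: "'a set" and E :: "'a set set" and t :: nat
  assumes "t \<ge> 3" and "block_graph V E"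
  shows "k_decomposable (t - 2) (CF t V E) \<and> shellable (CF t V E)"
proof -
  have finV: "finite V" using assms(2) unfolding block_graph_def simple_graph_def by blast
  show ?thesis unfolding CF_eq[OF assms]
    by (rule core[OF finV blocks_treelike[OF assms(2)]])
qed

end
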